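(* Let $N=\{1,\dots,n\}$, $\eta>0$, $B\ge1$ an integer. Let $(A(k))_{k\ge0}$ be $n\times n$ matrices, $x(0)\in\mathbb{R}^n$, and $x(k+1)=A(k)x(k)$. Assume: (i) each $A(k)$ is doubly stochastic with positive diagonal entries and all positive entries at least $\eta$; (ii) for every integer $k\ge0$, every permutation $\sigma$ of $N$ with $x_{\sigma(1)}(kB)\ge\cdots\ge x_{\sigma(n)}(kB)$, and every $d\in\{1,\dots,n-1\}$, either $x_{\sigma(d)}(kB)=x_{\sigma(d+1)}(kB)$, or there exist $t\in\{kB,\dots,(k+1)B-1\}$, $i\in\{\sigma(1),\dots,\sigma(d)\}$, $j\in\{\sigma(d+1),\dots,\sigma(n)\}$ with $(i,j)$ or $(j,i)$ in $\mathcal{E}(A(t))$. Then for every integer $k\ge0$ with $V(x(kB))>0$, \[\frac{V(x(kB))-V(x((k+1)B))}{V(x(kB))}\ge\frac{\eta}{2n^2}.\]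
   Context: A matrix is doubly stochastic if it is nonnegative with all row and column sums equal to $1$. For a matrix $A=[a_{ij}]$, $\mathcal{E}(A)$ is the set of directed edges $(j,i)$ (including self-edges) with $a_{ij}>0$. For $x\in\mathbb{R}^n$, $\bar x=\frac1n\sum_ix_i$ and $V(x)=\sum_i(x_i-\bar x)^2$. *)

theory Defs
  imports "HOL-Combinatorics.Permutations" Complex_Main
begin

text \<open>n x n matrices are functions nat => nat => real, indices 0..n-1 (index i stands for i+1).\<close>

definition doubly_stochastic :: "nat \<Rightarrow> (nat \<Rightarrow> nat \<Rightarrow> real) \<Rightarrow> bool" where
  "doubly_stochastic n A \<longleftrightarrow>
     (\<forall>i<n. \<forall>j<n. A i j \<ge> 0) \<and>
     (\<forall>i<n. (\<Sum>j<n. A i j) = 1) \<and>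
     (\<forall>j<n. (\<Sum>i<n. A i j) = 1)"

definition edges :: "nat \<Rightarrow> (nat \<Rightarrow> nat \<Rightarrow> real) \<Rightarrow> (nat \<times> nat) set" where
  "edges n A = {(j, i). i < n \<and> j < n \<and> A i j > 0}"

definition avg :: "nat \<Rightarrow> (nat \<Rightarrow> real) \<Rightarrow> real" where
  "avg n x = (\<Sum>i<n. x i) / real n"

definition V :: "nat \<Rightarrow> (nat \<Rightarrow> real) \<Rightarrow> real" where
  "V n x = (\<Sum>i<n. (x i - avg n x)^2)"

end

theory Submission imports Defs "HOL-Analysis.Convex"
begin

lemma conv_lower:
  fixes w y :: "nat \<Rightarrow> real"
  assumes "\<forall>j<n. w j \<ge> 0" "(\<Sum>j<n. w j) = 1" "\<forall>j<n. w j \<noteq> 0 \<longrightarrow> y j \<ge> c"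
  shows "(\<Sum>j<n. w j * y j) \<ge> c"
proof -
  have "(\<Sum>j<n. w j * c) \<le> (\<Sum>j<n. w j * y j)"
    by (rule sum_mono) (use assms in \<open>auto intro: mult_left_mono simp del: \<close>, metis mult_left_mono mult_zero_left order_refl)
  moreover have "(\<Sum>j<n. w j * c) = c" using assms(2) by (simp add: sum_distrib_right[symmetric])
  ultimately show ?thesis by simp
qed

lemma conv_upper:
  fixes w y :: "nat \<Rightarrow> real"
  assumes "\<forall>j<n. w j \<ge> 0" "(\<Sum>j<n. w j) = 1" "\<forall>j<n. w j \<noteq> 0 \<longrightarrow> y j \<le> c"
  shows "(\<Sum>j<n. w j * y j) \<le> c"
proof -
  have "(\<Sum>j<n. w j * c) \<ge> (\<Sum>j<n. w j * y j)"
    by (rule sum_mono) (use assms in \<open>auto intro: mult_left_mono simp del: \<close>, metis mult_left_mono mult_zero_left order_refl)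
  moreover have "(\<Sum>j<n. w j * c) = c" using assms(2) by (simp add: sum_distrib_right[symmetric])
  ultimately show ?thesis by simp
qed

lemma V_diff:
  assumes "(\<Sum>i<n. y i) = (\<Sum>i<n. y' i)"
  shows "V n y - V n y' = (\<Sum>i<n. (y i)^2) - (\<Sum>i<n. (y' i)^2)"
proof -
  have gen: "V n z = (\<Sum>i<n. (z i)^2) - 2 * avg n z * (\<Sum>i<n. z i) + real n * (avg n z)^2" for z
    unfolding V_def by (simp add: power2_diff sum.distrib sum_subtractf sum_distrib_left sum_distrib_right algebra_simps)
  have "avg n y = avg n y'" unfolding avg_def using assms by simp
  then show ?thesis using gen[of y] gen[of y'] assms by simp
qed

lemma step_identity:
  fixes y y' :: "nat \<Rightarrow> real"
  assumes ds: "doubly_stochastic n M" and dy: "\<And>i. i < n \<Longrightarrow> y' i = (\<Sum>j<n. M i j * y j)"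
  shows "(\<Sum>i<n. y' i) = (\<Sum>i<n. y i)"
    and "(\<Sum>i<n. (y i)^2) - (\<Sum>i<n. (y' i)^2) = (\<Sum>l<n. \<Sum>j<n. M l j * (y j - y' l)^2)"
proof -
  have row: "\<And>i. i<n \<Longrightarrow> (\<Sum>j<n. M i j) = 1" and col: "\<And>j. j<n \<Longrightarrow> (\<Sum>i<n. M i j) = 1"
    using ds unfolding doubly_stochastic_def by auto
  have "(\<Sum>i<n. y' i) = (\<Sum>i<n. \<Sum>j<n. M i j * y j)" using dy by simp
  also have "\<dots> = (\<Sum>j<n. \<Sum>i<n. M i j * y j)" by (rule sum.swap)
  also have "\<dots> = (\<Sum>j<n. (\<Sum>i<n. M i j) * y j)" by (simp add: sum_distrib_right)
  also have "\<dots> = (\<Sum>j<n. y j)" using col by simp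
  finally show "(\<Sum>i<n. y' i) = (\<Sum>i<n. y i)" .
  have trm: "(\<Sum>j<n. M l j * (y j - y' l)^2) = (\<Sum>j<n. M l j * (y j)^2) - (y' l)^2" if l: "l < n" for l
  proof -
    have "(\<Sum>j<n. M l j * (y j - y' l)^2) = (\<Sum>j<n. M l j * (y j)^2) - 2 * y' l * (\<Sum>j<n. M l j * y j) + (y' l)^2 * (\<Sum>j<n. M l j)"
      using sum_distrib_right[of "M l" "{..<n}" "(y' l)^2", symmetric] by (simp add: power2_diff algebra_simps sum.distrib sum_subtractf sum_distrib_left)
    also have "\<dots> = (\<Sum>j<n. M l j * (y j)^2) - (y' l)^2" using row[OF l] dy[OF l, symmetric] by (simp add: power2_eq_square sum_distrib_right[symmetric])
    finally show ?thesis .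
  qed
  have "(\<Sum>l<n. \<Sum>j<n. M l j * (y j - y' l)^2) = (\<Sum>l<n. (\<Sum>j<n. M l j * (y j)^2) - (y' l)^2)"
    using trm by simp
  also have "\<dots> = (\<Sum>l<n. \<Sum>j<n. M l j * (y j)^2) - (\<Sum>l<n. (y' l)^2)" by (simp add: sum_subtractf)
  also have "(\<Sum>l<n. \<Sum>j<n. M l j * (y j)^2) = (\<Sum>j<n. \<Sum>l<n. M l j * (y j)^2)" by (rule sum.swap)
  also have "\<dots> = (\<Sum>j<n. (\<Sum>l<n. M l j) * (y j)^2)" by (simp add: sum_distrib_right)
  also have "\<dots> = (\<Sum>j<n. (y j)^2)" using col by simp
  finally show "(\<Sum>i<n. (y i)^2) - (\<Sum>i<n. (y' i)^2) = (\<Sum>l<n. \<Sum>j<n. M l j * (y j - y' l)^2)" by simp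
qed

lemma row_bound:
  fixes w y :: "nat \<Rightarrow> real"
  assumes nn: "\<forall>j<n. w j \<ge> 0" and lbw: "\<forall>j<n. w j > 0 \<longrightarrow> w j \<ge> \<eta>" and eta: "\<eta> > 0"
    and p: "p < n" "w p > 0" and q: "q < n" "w q > 0"
  shows "\<eta> / 2 * (y p - y q)^2 \<le> (\<Sum>j<n. w j * (y j - z)^2)"
proof (cases "p = q")
  case True
  then show ?thesis using nn by (auto intro!: sum_nonneg)
next
  case False
  have "(\<Sum>j\<in>{p,q}. w j * (y j - z)^2) \<le> (\<Sum>j<n. w j * (y j - z)^2)"
    by (rule sum_mono2) (use p q nn in auto)
  moreover have "(\<Sum>j\<in>{p,q}. w j * (y j - z)^2) = w p * (y p - z)^2 + w q * (y q - z)^2"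
    using False by simp
  moreover have "w p * (y p - z)^2 \<ge> \<eta> * (y p - z)^2" using lbw p by (intro mult_right_mono) auto
  moreover have "w q * (y q - z)^2 \<ge> \<eta> * (y q - z)^2" using lbw q by (intro mult_right_mono) auto
  moreover have "\<eta> / 2 * (y p - y q)^2 \<le> \<eta> * (y p - z)^2 + \<eta> * (y q - z)^2"
  proof -
    have e: "2*((y p - z)^2 + (y q - z)^2) - (y p - y q)^2 = (y p + y q - 2*z)^2"
      by (simp add: power2_eq_square algebra_simps)
    have "(y p - y q)^2 \<le> 2 * ((y p - z)^2 + (y q - z)^2)"
      using e zero_le_power2[of "y p + y q - 2*z"] by linarith
    then have "\<eta> / 2 * (y p - y q)^2 \<le> \<eta> / 2 * (2 * ((y p - z)^2 + (y q - z)^2))"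
      using eta by (intro mult_left_mono) auto
    then show ?thesis by (simp add: algebra_simps)
  qed
  ultimately show ?thesis by linarith
qed

lemma telescope_gap:
  fixes v :: "nat \<Rightarrow> real"
  assumes "1 \<le> a" "a \<le> b"
  shows "(\<Sum>d\<in>{a..b}. v (d - 1) - v d) = v (a - 1) - v b"
  using assms(2)
proof (induction b rule: dec_induct)
  case base then show ?case by simp
next
  case (step m)
  have "{a..Suc m} = insert (Suc m) {a..m}" using step by auto
  then show ?case using step by simp
qed

lemma subset_gap_sum:
  fixes v :: "nat \<Rightarrow> real"
  assumes D: "finite D" "D \<noteq> {}" "D \<subseteq> {1..<n}"
    and anti: "\<And>a b. a \<le> b \<Longrightarrow> b < n \<Longrightarrow> v b \<le> v a"
  shows "(\<Sum>d\<in>D. v (d - 1) - v d) \<le> v (Min D - 1) - v (Max D)"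
proof -
  have mn: "1 \<le> Min D" "Min D \<le> Max D" "Max D < n" using D by auto
  have "(\<Sum>d\<in>D. v (d - 1) - v d) \<le> (\<Sum>d\<in>{Min D..Max D}. v (d - 1) - v d)"
  proof (rule sum_mono2)
    show "finite {Min D..Max D}" by simp
    show "D \<subseteq> {Min D..Max D}" using D by auto
    fix b assume "b \<in> {Min D..Max D} - D"
    then have "1 \<le> b" "b < n" using mn by auto
    then show "0 \<le> v (b - 1) - v b" using anti[of "b-1" b] by simp
  qed
  also have "\<dots> = v (Min D - 1) - v (Max D)" using telescope_gap mn by blast
  finally show ?thesis .
qed

lemma sq_sum:
  fixes g :: "nat \<Rightarrow> real"
  assumes "finite D" "\<forall>d\<in>D. g d \<ge> 0"
  shows "(\<Sum>d\<in>D. (g d)^2) \<le> (\<Sum>d\<in>D. g d)^2"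
proof -
  have "(\<Sum>d\<in>D. (g d)^2) \<le> (\<Sum>d\<in>D. g d * (\<Sum>e\<in>D. g e))"
    apply (rule sum_mono)
    using assms by (auto simp: power2_eq_square intro!: mult_left_mono member_le_sum)
  also have "\<dots> = (\<Sum>d\<in>D. g d)^2" by (simp add: power2_eq_square sum_distrib_right)
  finally show ?thesis .
qed

lemma sort_perm:
  fixes f :: "nat \<Rightarrow> real"
  shows "\<exists>\<sigma>. \<sigma> permutes {..<n} \<and> (\<forall>a b. a < b \<and> b < n \<longrightarrow> f (\<sigma> a) \<ge> f (\<sigma> b))"
proof -
  define xs where "xs = sort_key (\<lambda>i. - f i) [0..<n]"
  define \<sigma> where "\<sigma> = (\<lambda>a. if a < n then xs ! a else a)"
  have len: "length xs = n" and dist: "distinct xs" and st: "set xs = {..<n}"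
    unfolding xs_def by auto
  have "bij_betw ((!) xs) {..<n} {..<n}" using bij_betw_nth[OF dist] len st by simp
  then have "bij_betw \<sigma> {..<n} {..<n}" by (rule bij_betw_cong[THEN iffD1, rotated]) (auto simp: \<sigma>_def)
  then have perm: "\<sigma> permutes {..<n}" by (rule bij_imp_permutes) (auto simp: \<sigma>_def)
  have srt: "sorted (map (\<lambda>i. - f i) xs)" unfolding xs_def by (rule sorted_sort_key)
  have "f (\<sigma> a) \<ge> f (\<sigma> b)" if "a < b" "b < n" for a b
  proof -
    have "map (\<lambda>i. - f i) xs ! a \<le> map (\<lambda>i. - f i) xs ! b"
      using srt that len by (intro sorted_nth_mono) auto
    then show ?thesis using that len by (simp add: \<sigma>_def)
  qed
  then show ?thesis using perm by blast
qed


theorem lemma5: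
  fixes n B :: nat and \<eta> :: real
    and A :: "nat \<Rightarrow> nat \<Rightarrow> nat \<Rightarrow> real"
    and x :: "nat \<Rightarrow> nat \<Rightarrow> real"
  assumes eta: "\<eta> > 0"
    and B: "B \<ge> 1"
    and dyn: "\<And>k i. i < n \<Longrightarrow> x (Suc k) i = (\<Sum>j<n. A k i j * x k j)"
    and ds: "\<And>k. doubly_stochastic n (A k)"
    and diag: "\<And>k i. i < n \<Longrightarrow> A k i i > 0"
    and lb: "\<And>k i j. i < n \<Longrightarrow> j < n \<Longrightarrow> A k i j > 0 \<Longrightarrow> A k i j \<ge> \<eta>"
    and conn: "\<And>k \<sigma> d. \<sigma> permutes {..<n} \<Longrightarrow>
        (\<forall>a b. a < b \<and> b < n \<longrightarrow> x (k * B) (\<sigma> a) \<ge> x (k * B) (\<sigma> b)) \<Longrightarrow>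
        1 \<le> d \<Longrightarrow> d \<le> n - 1 \<Longrightarrow>
        x (k * B) (\<sigma> (d - 1)) = x (k * B) (\<sigma> d) \<or>
        (\<exists>t i j. k * B \<le> t \<and> t \<le> (k + 1) * B - 1 \<and>
           i \<in> \<sigma> ` {..<d} \<and> j \<in> \<sigma> ` {d..<n} \<and>
           ((i, j) \<in> edges n (A t) \<or> (j, i) \<in> edges n (A t)))"
    and pos: "V n (x (k * B)) > 0"
  shows "(V n (x (k * B)) - V n (x ((k + 1) * B))) / V n (x (k * B)) \<ge> \<eta> / (2 * real n ^ 2)"
proof -
  define s where "s = k * B"
  have e_eq: "(k + 1) * B = s + B" unfolding s_def by simp
  have nn: "\<And>t i j. i < n \<Longrightarrow> j < n \<Longrightarrow> A t i j \<ge> 0"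
    using ds unfolding doubly_stochastic_def by auto
  have rs: "\<And>t i. i < n \<Longrightarrow> (\<Sum>j<n. A t i j) = 1"
    using ds unfolding doubly_stochastic_def by auto
  obtain \<sigma> where perm: "\<sigma> permutes {..<n}"
    and srt: "\<forall>a b. a < b \<and> b < n \<longrightarrow> x s (\<sigma> a) \<ge> x s (\<sigma> b)"
    using sort_perm[of n "x s"] by blast
  define v where "v a = x s (\<sigma> a)" for a
  have anti: "\<And>a b. a \<le> b \<Longrightarrow> b < n \<Longrightarrow> v b \<le> v a"
    using srt unfolding v_def by (metis le_neq_implies_less order_refl)
  have img: "\<sigma> ` {..<n} = {..<n}" using perm by (rule permutes_image)
  have inj: "inj \<sigma>" using perm by (rule permutes_inj)
  have surj_n: "\<And>i. i < n \<Longrightarrow> \<exists>a<n. \<sigma> a = i" using img by (metis imageE lessThan_iff)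
  have sig_lt: "\<And>a. a < n \<Longrightarrow> \<sigma> a < n" using img by auto
  have n2: "n \<ge> 2"
  proof (rule ccontr)
    assume "\<not> n \<ge> 2"
    then have "n = 0 \<or> n = 1" by auto
    then have "V n (x s) = 0" unfolding V_def avg_def by auto
    then show False using pos s_def by simp
  qed
  define cross where "cross d t \<longleftrightarrow> (\<exists>i j. i \<in> \<sigma> ` {..<d} \<and> j \<in> \<sigma> ` {d..<n} \<and>
           ((i, j) \<in> edges n (A t) \<or> (j, i) \<in> edges n (A t)))" for d t
  define G where "G = {d \<in> {1..<n}. v (d - 1) \<noteq> v d}"
  define td where "td d = (LEAST t. s \<le> t \<and> t \<le> s + B - 1 \<and> cross d t)" for d
  have ex_cross: "\<exists>t. s \<le> t \<and> t \<le> s + B - 1 \<and> cross d t" if "d \<in> G" for d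
    using conn[OF perm srt[unfolded s_def], of d] that unfolding G_def v_def cross_def s_def e_eq[unfolded s_def]
    by auto
  have td1: "s \<le> td d \<and> td d \<le> s + B - 1 \<and> cross d (td d)" if "d \<in> G" for d
    using LeastI_ex[OF ex_cross[OF that]] unfolding td_def .
  have td2: "\<not> cross d t" if "d \<in> G" "s \<le> t" "t < td d" for d t
  proof
    assume "cross d t"
    moreover have "t \<le> s + B - 1" using td1[OF that(1)] that by auto
    ultimately have "td d \<le> t" unfolding td_def using that(2) by (intro Least_le) auto
    then show False using that by simp
  qed
  have inv: "(\<forall>i\<in>\<sigma> ` {..<d}. x t i \<ge> v (d - 1)) \<and> (\<forall>j\<in>\<sigma> ` {d..<n}. x t j \<le> v d)"
    if dG: "d \<in> G" and st: "s \<le> t" and tt: "t \<le> td d" for d t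
    using st tt
  proof (induction t rule: dec_induct)
    case base
    have "d < n" "1 \<le> d" using dG unfolding G_def by auto
    then have h1: "\<forall>i<d. v i \<ge> v (d - 1)" and h2: "\<forall>j. d \<le> j \<and> j < n \<longrightarrow> v j \<le> v d"
      using anti by auto
    show ?case using h1 h2 unfolding v_def by auto
  next
    case (step m)
    have dn: "d < n" "1 \<le> d" using dG unfolding G_def by auto
    have nc: "\<not> cross d m" using td2[OF dG step(1)] step(2,4) by simp
    have IH: "(\<forall>i\<in>\<sigma> ` {..<d}. x m i \<ge> v (d - 1)) \<and> (\<forall>j\<in>\<sigma> ` {d..<n}. x m j \<le> v d)"
      using step by simp
    have top: "x (Suc m) i \<ge> v (d - 1)" if "i \<in> \<sigma> ` {..<d}" for i
    proof -
      have iN: "i < n" using that dn sig_lt by auto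
      have "\<forall>j<n. A m i j \<noteq> 0 \<longrightarrow> x m j \<ge> v (d - 1)"
      proof (intro allI impI)
        fix j assume j: "j < n" "A m i j \<noteq> 0"
        then have pos': "A m i j > 0" using nn[OF iN j(1), of m] by simp
        obtain b where b: "b < n" "\<sigma> b = j" using surj_n j by blast
        show "x m j \<ge> v (d - 1)"
        proof (cases "b < d")
          case True then show ?thesis using IH b by auto
        next
          case False
          then have "j \<in> \<sigma> ` {d..<n}" using b by auto
          moreover have "(j, i) \<in> edges n (A m)" unfolding edges_def using iN j pos' by auto
          ultimately have "cross d m" unfolding cross_def using that by blast
          then show ?thesis using nc by simp
        qed
      qed
      then show ?thesis using dyn[OF iN, of m] conv_lower[where n=n and w="A m i" and y="x m" and c="v (d - 1)"] nn[OF iN] rs[OF iN]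
        by auto
    qed
    have bot: "x (Suc m) i \<le> v d" if "i \<in> \<sigma> ` {d..<n}" for i
    proof -
      have iN: "i < n" using that dn sig_lt by auto
      have "\<forall>j<n. A m i j \<noteq> 0 \<longrightarrow> x m j \<le> v d"
      proof (intro allI impI)
        fix j assume j: "j < n" "A m i j \<noteq> 0"
        then have pos': "A m i j > 0" using nn[OF iN j(1), of m] by simp
        obtain b where b: "b < n" "\<sigma> b = j" using surj_n j by blast
        show "x m j \<le> v d"
        proof (cases "b < d")
          case False then show ?thesis using IH b by auto
        next
          case True
          then have "j \<in> \<sigma> ` {..<d}" using b by auto
          moreover have "(j, i) \<in> edges n (A m)" unfolding edges_def using iN j pos' by auto
          ultimately have "cross d m" unfolding cross_def using that by blast
          then show ?thesis using nc by simp
        qed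
      qed
      then show ?thesis using dyn[OF iN, of m] conv_upper[where n=n and w="A m i" and y="x m" and c="v d"] nn[OF iN] rs[OF iN]
        by auto
    qed
    show ?case using top bot by auto
  qed
  define W where "W d l \<longleftrightarrow> l < n \<and> (\<exists>p<n. \<exists>q<n. A (td d) l p > 0 \<and> A (td d) l q > 0 \<and>
       x (td d) p \<ge> v (d - 1) \<and> x (td d) q \<le> v d)" for d l
  have exW: "\<exists>l. W d l" if dG: "d \<in> G" for d
  proof -
    obtain i j where ij: "i \<in> \<sigma> ` {..<d}" "j \<in> \<sigma> ` {d..<n}"
      "(i, j) \<in> edges n (A (td d)) \<or> (j, i) \<in> edges n (A (td d))"
      using td1[OF dG] unfolding cross_def by blast
    have iv: "x (td d) i \<ge> v (d - 1)" "x (td d) j \<le> v d"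
      using inv[OF dG] td1[OF dG] ij by auto
    have ijn: "i < n" "j < n" using ij(1,2) dG sig_lt unfolding G_def by auto
    show ?thesis
    proof (cases "(i, j) \<in> edges n (A (td d))")
      case True
      then have "A (td d) j i > 0" unfolding edges_def by auto
      then have "W d j" unfolding W_def using ijn iv diag[OF ijn(2)] by blast
      then show ?thesis ..
    next
      case False
      then have "A (td d) i j > 0" using ij(3) unfolding edges_def by auto
      then have "W d i" unfolding W_def using ijn iv diag[OF ijn(1)] by blast
      then show ?thesis ..
    qed
  qed
  define ld where "ld d = (SOME l. W d l)" for d
  have ldW: "W d (ld d)" if "d \<in> G" for d
    unfolding ld_def using exW[OF that] by (rule someI_ex)
  define f where "f d = (td d, ld d)" for d
  define Var where "Var t l = (\<Sum>j<n. A t l j * (x t j - x (Suc t) l)^2)" for t l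
  define gap where "gap d = v (d - 1) - v d" for d
  have gap_nn: "gap d \<ge> 0" if "d \<in> {1..<n}" for d
    using anti[of "d - 1" d] that unfolding gap_def by auto
  have finG: "finite G" unfolding G_def by simp
  have GS: "G \<subseteq> {1..<n}" unfolding G_def by auto
  have Var_nn: "Var t l \<ge> 0" if "l < n" for t l
    unfolding Var_def using nn[OF that] by (auto intro!: sum_nonneg)
  have fimg: "f ` G \<subseteq> {s..<s+B} \<times> {..<n}"
    using td1 ldW B unfolding f_def W_def by fastforce
  have local: "\<eta> / 2 * (\<Sum>d\<in>{d \<in> G. f d = (t, l)}. (gap d)^2) \<le> Var t l"
    if tl: "(t, l) \<in> {s..<s+B} \<times> {..<n}" for t l
  proof (cases "{d \<in> G. f d = (t, l)} = {}")
    case True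
    then have "(\<Sum>d\<in>{d \<in> G. f d = (t, l)}. (gap d)^2) = 0" by (metis sum.empty)
    then show ?thesis using Var_nn[of l t] tl by simp
  next
    case False
    define D where "D = {d \<in> G. f d = (t, l)}"
    have finD: "finite D" and DG: "D \<subseteq> G" unfolding D_def using finG by auto
    have Dne: "D \<noteq> {}" using False D_def by simp
    have DS: "D \<subseteq> {1..<n}" using DG GS by auto
    have mi: "Min D \<in> D" and ma: "Max D \<in> D" using finD Dne by auto
    have fD: "\<And>d. d \<in> D \<Longrightarrow> td d = t \<and> ld d = l" unfolding D_def f_def by auto
    obtain p where p: "p < n" "A t l p > 0" "x t p \<ge> v (Min D - 1)"
      using ldW[of "Min D"] mi DG fD[OF mi] unfolding W_def by auto
    obtain q where q: "q < n" "A t l q > 0" "x t q \<le> v (Max D)"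
      using ldW[of "Max D"] ma DG fD[OF ma] unfolding W_def by auto
    have s1: "(\<Sum>d\<in>D. gap d) \<le> x t p - x t q"
      using subset_gap_sum[OF finD Dne DS, where v=v, OF anti] p q unfolding gap_def by linarith
    have s0: "(\<Sum>d\<in>D. gap d) \<ge> 0" using DS gap_nn by (auto intro!: sum_nonneg)
    have "(\<Sum>d\<in>D. (gap d)^2) \<le> (\<Sum>d\<in>D. gap d)^2"
      using DS gap_nn by (intro sq_sum[OF finD]) auto
    also have "\<dots> \<le> (x t p - x t q)^2" using s0 s1 by (intro power_mono) auto
    finally have "\<eta> / 2 * (\<Sum>d\<in>D. (gap d)^2) \<le> \<eta> / 2 * (x t p - x t q)^2"
      using eta by (intro mult_left_mono) auto
    also have "\<dots> \<le> Var t l" unfolding Var_def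
      using tl by (intro row_bound[OF _ _ eta p(1,2) q(1,2)]) (auto intro: nn lb)
    finally show ?thesis unfolding D_def .
  qed
  have "\<eta> / 2 * (\<Sum>d\<in>G. (gap d)^2) = \<eta> / 2 * (\<Sum>y\<in>{s..<s+B} \<times> {..<n}. \<Sum>d\<in>{d \<in> G. f d = y}. (gap d)^2)"
    using sum.group[OF finG _ fimg, of "\<lambda>d. (gap d)^2"] by simp
  also have "\<dots> = (\<Sum>y\<in>{s..<s+B} \<times> {..<n}. \<eta> / 2 * (\<Sum>d\<in>{d \<in> G. f d = y}. (gap d)^2))"
    by (simp add: sum_distrib_left)
  also have "\<dots> \<le> (\<Sum>y\<in>{s..<s+B} \<times> {..<n}. case y of (t, l) \<Rightarrow> Var t l)"
    by (rule sum_mono) (use local in auto)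
  also have "\<dots> = (\<Sum>t\<in>{s..<s+B}. \<Sum>l<n. Var t l)" by (simp add: sum.cartesian_product)
  also have "\<dots> = (\<Sum>t\<in>{s..<s+B}. V n (x t) - V n (x (Suc t)))"
  proof (rule sum.cong[OF refl])
    fix t
    have a: "(\<Sum>i<n. x (Suc t) i) = (\<Sum>i<n. x t i)"
      and b: "(\<Sum>i<n. (x t i)^2) - (\<Sum>i<n. (x (Suc t) i)^2) = (\<Sum>l<n. Var t l)"
      using step_identity[OF ds[of t], where y="x t" and y'="x (Suc t)"] dyn unfolding Var_def by auto
    show "(\<Sum>l<n. Var t l) = V n (x t) - V n (x (Suc t))"
      using V_diff[where n=n and y="x t" and y'="x (Suc t)"] a b by simp
  qed
  also have "\<dots> = V n (x s) - V n (x (s + B))"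
    using sum_Suc_diff'[where m=s and n="s + B" and f="\<lambda>t. - V n (x t)"] by simp
  finally have dec: "\<eta> / 2 * (\<Sum>d\<in>G. (gap d)^2) \<le> V n (x s) - V n (x (s + B))" .
  have SG: "(\<Sum>d\<in>G. (gap d)^2) = (\<Sum>d\<in>{1..<n}. (gap d)^2)"
    by (rule sum.mono_neutral_left) (auto simp: G_def gap_def)
  have tel: "v 0 - v (n - 1) = (\<Sum>d\<in>{1..<n}. gap d)"
  proof -
    have "{1..<n} = {1..n-1}" using n2 by auto
    then show ?thesis using telescope_gap[where a=1 and b="n - 1" and v=v] n2 unfolding gap_def by simp
  qed
  have cs: "(\<Sum>d\<in>{1..<n}. gap d)^2 \<le> (\<Sum>d\<in>{1..<n}. (gap d)^2) * real (n - 1)"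
    using sum_squared_le_sum_of_squares[of gap "{1..<n}"] by simp
  have xb: "v (n - 1) \<le> x s i \<and> x s i \<le> v 0" if iN: "i < n" for i
  proof -
    obtain a where "a < n" "\<sigma> a = i" using surj_n[OF iN] by blast
    then show ?thesis using anti[of a "n - 1"] anti[of 0 a] unfolding v_def by auto
  qed
  have npos: "real n > 0" using n2 by simp
  have avb: "v (n - 1) \<le> avg n (x s) \<and> avg n (x s) \<le> v 0"
  proof -
    have "(\<Sum>i<n. x s i) \<le> (\<Sum>i<n. v 0)" by (rule sum_mono) (use xb in auto)
    moreover have "(\<Sum>i<n. x s i) \<ge> (\<Sum>i<n. v (n - 1))" by (rule sum_mono) (use xb in auto)
    ultimately show ?thesis unfolding avg_def using npos by (simp add: field_simps)
  qed
  have "V n (x s) \<le> (\<Sum>i<n. (v 0 - v (n - 1))^2)"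
    unfolding V_def
  proof (rule sum_mono)
    fix i assume "i \<in> {..<n}"
    then have "\<bar>x s i - avg n (x s)\<bar> \<le> \<bar>v 0 - v (n - 1)\<bar>" using xb[of i] avb by (simp add: abs_le_iff)
    then show "(x s i - avg n (x s))^2 \<le> (v 0 - v (n - 1))^2" by (simp add: abs_le_square_iff)
  qed
  also have "\<dots> = real n * (\<Sum>d\<in>{1..<n}. gap d)^2" using tel by simp
  also have "\<dots> \<le> real n * ((\<Sum>d\<in>{1..<n}. (gap d)^2) * real (n - 1))"
    using cs by (intro mult_left_mono) auto
  also have "\<dots> \<le> real n ^ 2 * (\<Sum>d\<in>G. (gap d)^2)"
  proof -
    have "(\<Sum>d\<in>{1..<n}. (gap d)^2) \<ge> 0" by (auto intro!: sum_nonneg)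
    moreover have "real (n - 1) \<le> real n" by simp
    ultimately have "real n * ((\<Sum>d\<in>{1..<n}. (gap d)^2) * real (n - 1)) \<le> real n * ((\<Sum>d\<in>{1..<n}. (gap d)^2) * real n)"
      using npos by (intro mult_left_mono) auto
    then show ?thesis unfolding SG by (simp add: power2_eq_square algebra_simps)
  qed
  finally have Vb: "V n (x s) \<le> real n ^ 2 * (\<Sum>d\<in>G. (gap d)^2)" .
  have Vp: "V n (x s) > 0" using pos s_def by simp
  have "\<eta> / (2 * real n ^ 2) * V n (x s) \<le> \<eta> / (2 * real n ^ 2) * (real n ^ 2 * (\<Sum>d\<in>G. (gap d)^2))"
    using Vb eta npos by (intro mult_left_mono) auto
  also have "\<dots> = \<eta> / 2 * (\<Sum>d\<in>G. (gap d)^2)" using npos by (simp add: field_simps)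
  finally have "\<eta> / (2 * real n ^ 2) * V n (x s) \<le> V n (x s) - V n (x (s + B))" using dec by linarith
  then show ?thesis unfolding e_eq s_def[symmetric] using Vp by (simp add: le_divide_eq)
qed

end
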